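(* Let $N\ge3$, suppose $\boldsymbol{\mathfrak h}\notin\mathrm{col}(C)$, let $\mathbf p=\mathrm{proj}_{\ker(C)}\boldsymbol{\mathfrak h}$ (orthogonal projection), $\gamma_{\max}=\|\mathbf p\|_\infty^{-1}$, and let $\gamma\in\mathbb{R}$ with $0<|\gamma|\le\gamma_{\max}$. Set $\tilde{\boldsymbol{\mathfrak b}}=\gamma\mathbf p$ and $\boldsymbol\theta=\tfrac12\arccos\tilde{\boldsymbol{\mathfrak b}}$ (entrywise). Then the dephasing code associated with $\boldsymbol\theta$ satisfies $PSP\in\mathbb{R}P$ for all $S\in\mathfrak{S}$, and $PHP=\tfrac{\gamma}{2}\|\mathbf p\|_2^2\,Z_L\not\propto P$. Moreover, if $\ker(C)$ is one-dimensional and $\gamma=\gamma_{\max}$, then $\tilde{\boldsymbol{\mathfrak b}}$ is an optimal solution of the problem: maximize $\boldsymbol{\mathfrak b}\cdot\boldsymbol{\mathfrak h}$ subject to $\|\boldsymbol{\mathfrak b}\|_\infty\le1$, $\boldsymbol{\mathfrak b}\perp\mathrm{col}(C)$.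
   Context: Qubits $1,\dots,N$; $Z_j$, $X_j$ denote the Pauli $Z$, $X$ operators on qubit $j$ of $(\mathbb{C}^2)^{\otimes N}$. For $\mathbf v\in\mathbb{R}^N$, $\mathbf v\cdot\mathbf Z:=\sum_j v_jZ_j$. Dephasing model: $\boldsymbol{\mathfrak h}\in\mathbb{R}^N$, $H=\tfrac12\boldsymbol{\mathfrak h}\cdot\mathbf Z$; $C$ is a real symmetric positive semidefinite $N\times N$ matrix with orthonormal eigenvectors $\mathbf v_1,\dots,\mathbf v_N$ and eigenvalues $\lambda_1,\dots,\lambda_N\ge0$; $L_j=\sqrt{\lambda_j}\,\mathbf v_j\cdot\mathbf Z$; $\mathrm{col}(C),\ker(C)$ are column space and kernel of $C$; the Lindblad span $\mathfrak{S}$ is the real span of $I$, all $L_i$ and all $L_iL_j$. Dephasing code for $\boldsymbol\theta\in\mathbb{R}^N$: $|0_L\rangle=\bigotimes_{j=1}^N(\cos\theta_j|0\rangle+i\sin\theta_j|1\rangle)$, $|1_L\rangle=X^{\otimes N}|0_L\rangle$, $P=|0_L\rangle\langle0_L|+|1_L\rangle\langle1_L|$, $Z_L=|0_L\rangle\langle0_L|-|1_L\rangle\langle1_L|$. *)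

theory Defs
  imports "Jordan_Normal_Form.Matrix_Kernel"
begin

(* Computational basis of (C^2)^{\<otimes>N}: basis state x < 2^N, qubit j (0-indexed, j < N)
   is in state |1> iff bit j of x is set. *)
definition qbit :: "nat \<Rightarrow> nat \<Rightarrow> bool" where
  "qbit x j = odd (x div 2 ^ j)"

definition Zq :: "nat \<Rightarrow> nat \<Rightarrow> complex mat" where
  "Zq N j = mat (2^N) (2^N) (\<lambda>(x, y). if x = y then (if qbit x j then -1 else 1) else 0)"

definition Xall :: "nat \<Rightarrow> complex mat" where
  "Xall N = mat (2^N) (2^N) (\<lambda>(x, y). if (\<forall>j<N. qbit x j \<noteq> qbit y j) then 1 else 0)"

fun msum :: "nat \<Rightarrow> (nat \<Rightarrow> complex mat) \<Rightarrow> nat \<Rightarrow> complex mat" where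
  "msum d f 0 = 0\<^sub>m d d"
| "msum d f (Suc k) = msum d f k + f k"

definition dotZ :: "nat \<Rightarrow> real vec \<Rightarrow> complex mat" where
  "dotZ N v = msum (2^N) (\<lambda>j. complex_of_real (v $ j) \<cdot>\<^sub>m Zq N j) N"

definition ketbra :: "complex vec \<Rightarrow> complex vec \<Rightarrow> complex mat" where
  "ketbra u w = mat (dim_vec u) (dim_vec w) (\<lambda>(i, j). u $ i * cnj (w $ j))"

definition ket0L :: "nat \<Rightarrow> real vec \<Rightarrow> complex vec" where
  "ket0L N \<theta> = vec (2^N) (\<lambda>x. \<Prod>j<N. if qbit x j then \<i> * complex_of_real (sin (\<theta> $ j))
                                              else complex_of_real (cos (\<theta> $ j)))"

definition ket1L :: "nat \<Rightarrow> real vec \<Rightarrow> complex vec" where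
  "ket1L N \<theta> = Xall N *\<^sub>v ket0L N \<theta>"

definition codeP :: "nat \<Rightarrow> real vec \<Rightarrow> complex mat" where
  "codeP N \<theta> = ketbra (ket0L N \<theta>) (ket0L N \<theta>) + ketbra (ket1L N \<theta>) (ket1L N \<theta>)"

definition codeZL :: "nat \<Rightarrow> real vec \<Rightarrow> complex mat" where
  "codeZL N \<theta> = ketbra (ket0L N \<theta>) (ket0L N \<theta>) - ketbra (ket1L N \<theta>) (ket1L N \<theta>)"

definition lindblad_span :: "nat \<Rightarrow> (nat \<Rightarrow> complex mat) \<Rightarrow> complex mat set" where
  "lindblad_span N L = {complex_of_real a \<cdot>\<^sub>m 1\<^sub>m (2^N)
        + msum (2^N) (\<lambda>i. complex_of_real (b i) \<cdot>\<^sub>m L i) N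
        + msum (2^N) (\<lambda>i. msum (2^N) (\<lambda>j. complex_of_real (c i j) \<cdot>\<^sub>m (L i * L j)) N) N
      | a b c. True}"

definition colspace :: "real mat \<Rightarrow> real vec set" where
  "colspace C = {C *\<^sub>v x | x. x \<in> carrier_vec (dim_col C)}"

definition is_orth_proj :: "real vec set \<Rightarrow> real vec \<Rightarrow> real vec \<Rightarrow> bool" where
  "is_orth_proj K h p \<longleftrightarrow> p \<in> K \<and> (\<forall>w\<in>K. (h - p) \<bullet> w = 0)"

definition linf_norm :: "real vec \<Rightarrow> real" where
  "linf_norm p = Max ((\<lambda>i. \<bar>p $ i\<bar>) ` {0..<dim_vec p})"

end

theory Submission
  imports Defs
begin



lemma qbit_0: "qbit x 0 = odd x" by (simp add: qbit_def)
lemma qbit_Suc: "qbit x (Suc j) = qbit (x div 2) j"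
  by (simp add: qbit_def div_mult2_eq)

lemma sum_twice: "(\<Sum>x<2*m. f x) = (\<Sum>y<m. f (2*y) + f (2*y+1))" for f :: "nat \<Rightarrow> 'a::comm_monoid_add"
proof (induction m)
  case 0 then show ?case by simp
next
  case (Suc m)
  have "2 * Suc m = Suc (Suc (2*m))" by simp
  then show ?case using Suc by (simp add: add_ac)
qed

lemma sum_prod_bits:
  fixes g :: "nat \<Rightarrow> bool \<Rightarrow> 'a::comm_semiring_1"
  shows "(\<Sum>x<2^N. \<Prod>j<N. g j (qbit x j)) = (\<Prod>j<N. g j False + g j True)"
proof (induction N arbitrary: g)
  case 0 then show ?case by simp
next
  case (Suc N)
  have e: "(\<Prod>j<Suc N. g j (qbit x j)) = g 0 (odd x) * (\<Prod>j<N. g (Suc j) (qbit (x div 2) j))" for x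
    by (simp only: prod.lessThan_Suc_shift qbit_0 qbit_Suc)
  have "(\<Sum>x<2^Suc N. \<Prod>j<Suc N. g j (qbit x j))
      = (\<Sum>y<2^N. g 0 False * (\<Prod>j<N. g (Suc j) (qbit y j)) + g 0 True * (\<Prod>j<N. g (Suc j) (qbit y j)))"
    unfolding e power_Suc sum_twice by simp
  also have "\<dots> = (g 0 False + g 0 True) * (\<Sum>y<2^N. \<Prod>j<N. g (Suc j) (qbit y j))"
    by (simp add: sum.distrib sum_distrib_left algebra_simps)
  also have "\<dots> = (\<Prod>j<Suc N. g j False + g j True)"
    using Suc[of "\<lambda>j. g (Suc j)"] by (simp only: prod.lessThan_Suc_shift)
  finally show ?case .
qed

definition fl :: "nat \<Rightarrow> nat \<Rightarrow> nat" where "fl N x = 2^N - 1 - x"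

lemma fl_bits: "x < 2^N \<Longrightarrow> j < N \<Longrightarrow> qbit (fl N x) j = (\<not> qbit x j)"
proof (induction N arbitrary: x j)
  case 0 then show ?case by simp
next
  case (Suc N)
  have x2: "x div 2 < 2^N" using Suc.prems by auto
  have eq: "fl (Suc N) x = 2 * fl N (x div 2) + (if odd x then 0 else 1)"
    using Suc.prems unfolding fl_def by (cases "odd x") (auto elim!: oddE evenE simp: algebra_simps)
  show ?case
  proof (cases j)
    case 0 then show ?thesis by (auto simp: eq qbit_0)
  next
    case (Suc j') 
    have "fl (Suc N) x div 2 = fl N (x div 2)" unfolding eq by simp
    then show ?thesis using Suc.IH[OF x2, of j'] Suc.prems Suc by (simp only: qbit_Suc)
  qed
qed

lemma fl_lt: "x < 2^N \<Longrightarrow> fl N x < 2^N" unfolding fl_def by simp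

lemma bits_inj: "x < 2^N \<Longrightarrow> y < 2^N \<Longrightarrow> (\<forall>j<N. qbit x j = qbit y j) \<Longrightarrow> x = y"
proof (induction N arbitrary: x y)
  case 0 then show ?case by simp
next
  case (Suc N)
  have "\<forall>j<N. qbit (x div 2) j = qbit (y div 2) j"
    using Suc.prems(3) by (auto simp flip: qbit_Suc)
  then have "x div 2 = y div 2"
    using Suc.IH[of "x div 2" "y div 2"] Suc.prems by auto
  moreover have "odd x = odd y" using Suc.prems(3)[rule_format, of 0] by (simp add: qbit_0)
  ultimately show ?case by (metis div_mult_mod_eq odd_iff_mod_2_eq_one parity_cases)
qed

lemma flip_iff: "x < 2^N \<Longrightarrow> y < 2^N \<Longrightarrow> (\<forall>j<N. qbit x j \<noteq> qbit y j) \<longleftrightarrow> y = fl N x"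
  using bits_inj[of y N "fl N x"] fl_bits[of x N] fl_lt[of x N] by auto




definition cA0 :: "real vec \<Rightarrow> nat \<Rightarrow> bool \<Rightarrow> complex" where
  "cA0 \<theta> j b = (if b then \<i> * complex_of_real (sin (\<theta> $ j)) else complex_of_real (cos (\<theta> $ j)))"
definition cA1 :: "real vec \<Rightarrow> nat \<Rightarrow> bool \<Rightarrow> complex" where
  "cA1 \<theta> j b = cA0 \<theta> j (\<not> b)"

definition amp :: "nat \<Rightarrow> (nat \<Rightarrow> bool \<Rightarrow> complex) \<Rightarrow> nat \<Rightarrow> complex" where
  "amp N A x = (\<Prod>j<N. A j (qbit x j))"

lemma ket0L_amp: "ket0L N \<theta> = vec (2^N) (amp N (cA0 \<theta>))"
  unfolding ket0L_def amp_def cA0_def by simp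

lemma ket1L_amp: "ket1L N \<theta> = vec (2^N) (amp N (cA1 \<theta>))"
proof (rule eq_vecI)
  show "dim_vec (ket1L N \<theta>) = dim_vec (vec (2 ^ N) (amp N (cA1 \<theta>)))"
    by (simp add: ket1L_def Xall_def ket0L_def)
next
  fix x assume "x < dim_vec (vec (2 ^ N) (amp N (cA1 \<theta>)))"
  then have x: "x < 2^N" by simp
  have "ket1L N \<theta> $ x = (\<Sum>y\<in>{0..<2^N}. (if (\<forall>j<N. qbit x j \<noteq> qbit y j) then 1 else 0) * amp N (cA0 \<theta>) y)"
    unfolding ket1L_def ket0L_amp using x
    by (simp add: mult_mat_vec_def scalar_prod_def Xall_def)
  also have "\<dots> = (\<Sum>y<2^N. (if y = fl N x then 1 else 0) * amp N (cA0 \<theta>) y)"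
    unfolding lessThan_atLeast0 by (rule sum.cong[OF refl]) (use flip_iff[OF x] in auto)
  also have "\<dots> = amp N (cA0 \<theta>) (fl N x)"
  proof -
    have "(\<Sum>y<2^N. (if y = fl N x then 1 else 0) * amp N (cA0 \<theta>) y) = (\<Sum>y<2^N. (if y = fl N x then amp N (cA0 \<theta>) y else 0))"
      by (rule sum.cong) auto
    also have "\<dots> = amp N (cA0 \<theta>) (fl N x)" using fl_lt[OF x] by (subst sum.delta) auto
    finally show ?thesis .
  qed
  also have "\<dots> = amp N (cA1 \<theta>) x"
    unfolding amp_def cA1_def using fl_bits[OF x] by (intro prod.cong) auto
  finally show "ket1L N \<theta> $ x = vec (2 ^ N) (amp N (cA1 \<theta>)) $ x" using x by simp
qed

definition dg :: "nat \<Rightarrow> (nat \<Rightarrow> complex) \<Rightarrow> complex mat" where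
  "dg n f = mat n n (\<lambda>(x, y). if x = y then f x else 0)"

definition kb :: "nat \<Rightarrow> (nat \<Rightarrow> complex) \<Rightarrow> (nat \<Rightarrow> complex) \<Rightarrow> complex mat" where
  "kb n a b = mat n n (\<lambda>(i, j). a i * cnj (b j))"

lemma ketbra_kb: "ketbra (vec n a) (vec n b) = kb n a b"
  unfolding ketbra_def kb_def by (rule eq_matI) auto

lemma sandwich: "kb n a b * dg n f * kb n c d = (\<Sum>k<n. cnj (b k) * f k * c k) \<cdot>\<^sub>m kb n a d"
proof (rule eq_matI)
  fix i j assume ij: "i < dim_row ((\<Sum>k<n. cnj (b k) * f k * c k) \<cdot>\<^sub>m kb n a d)" "j < dim_col ((\<Sum>k<n. cnj (b k) * f k * c k) \<cdot>\<^sub>m kb n a d)"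
  then have i: "i < n" and j: "j < n" by (auto simp: kb_def)
  have AD: "(kb n a b * dg n f) $$ (i, l) = a i * cnj (b l) * f l" if "l < n" for l
    using i that by (simp add: kb_def dg_def scalar_prod_def row_def col_def if_distrib sum.delta cong: if_cong)
  have "(kb n a b * dg n f * kb n c d) $$ (i, j) = (\<Sum>l<n. (a i * cnj (b l) * f l) * (c l * cnj (d j)))"
    using i j AD by (simp add: kb_def dg_def scalar_prod_def lessThan_atLeast0)
  also have "\<dots> = (\<Sum>k<n. cnj (b k) * f k * c k) * (a i * cnj (d j))"
    by (simp add: sum_distrib_right sum_distrib_left mult_ac)
  finally show "(kb n a b * dg n f * kb n c d) $$ (i, j) = ((\<Sum>k<n. cnj (b k) * f k * c k) \<cdot>\<^sub>m kb n a d) $$ (i, j)"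
    using i j by (simp add: kb_def)
qed (auto simp: kb_def dg_def)




lemma form_prod:
  "(\<Sum>x<2^N. cnj (amp N U x) * complex_of_real (\<Prod>j<N. e j (qbit x j)) * amp N W x)
   = (\<Prod>j<N. cnj (U j False) * complex_of_real (e j False) * W j False
             + cnj (U j True) * complex_of_real (e j True) * W j True)"
  unfolding amp_def cnj_prod of_real_prod prod.distrib[symmetric]
  by (rule sum_prod_bits[where g="\<lambda>j b. cnj (U j b) * complex_of_real (e j b) * W j b"])

definition zz :: "nat \<Rightarrow> nat \<Rightarrow> real" where "zz k x = (if qbit x k then -1 else 1)"
definition ez :: "nat \<Rightarrow> nat \<Rightarrow> bool \<Rightarrow> real" where "ez k j b = (if j = k then (if b then -1 else 1) else 1)"

lemma zz_prod: "k < N \<Longrightarrow> zz k x = (\<Prod>j<N. ez k j (qbit x j))"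
proof -
  assume k: "k < N"
  have "(\<Prod>j<N. ez k j (qbit x j)) = (\<Prod>j<N. if j = k then (if qbit x k then -1 else 1) else 1)"
    unfolding ez_def by (rule prod.cong) auto
  also have "\<dots> = zz k x" using k by (simp add: prod.delta zz_def)
  finally show ?thesis by simp
qed

lemma zz2_prod: "k < N \<Longrightarrow> l < N \<Longrightarrow> zz k x * zz l x = (\<Prod>j<N. ez k j (qbit x j) * ez l j (qbit x j))"
  by (simp add: zz_prod prod.distrib)

lemma one_prod: "(1::real) = (\<Prod>j<N. (\<lambda>j b. 1) j (qbit x j))" by simp

definition "Gf N u w f = (\<Sum>x<2^N. cnj (u x) * f x * w x)"

context
  fixes N :: nat and \<theta> :: "real vec" and \<beta> :: "nat \<Rightarrow> real"
  assumes cb: "\<forall>j<N. cos (\<theta> $ j)^2 - sin (\<theta> $ j)^2 = \<beta> j"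
begin


lemma G00e: "Gf N (amp N (cA0 \<theta>)) (amp N (cA0 \<theta>)) (\<lambda>x. complex_of_real (\<Prod>j<N. e j (qbit x j)))
  = complex_of_real (\<Prod>j<N. cos (\<theta>$j)^2 * e j False + sin (\<theta>$j)^2 * e j True)"
  unfolding Gf_def form_prod unfolding of_real_prod by (rule prod.cong) (auto simp: cA0_def power2_eq_square algebra_simps)


lemma G11e: "Gf N (amp N (cA1 \<theta>)) (amp N (cA1 \<theta>)) (\<lambda>x. complex_of_real (\<Prod>j<N. e j (qbit x j)))
  = complex_of_real (\<Prod>j<N. sin (\<theta>$j)^2 * e j False + cos (\<theta>$j)^2 * e j True)"
  unfolding Gf_def form_prod unfolding of_real_prod by (rule prod.cong) (auto simp: cA1_def cA0_def power2_eq_square algebra_simps)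

lemma G01e: "Gf N (amp N (cA0 \<theta>)) (amp N (cA1 \<theta>)) (\<lambda>x. complex_of_real (\<Prod>j<N. e j (qbit x j)))
  = (\<Prod>j<N. \<i> * complex_of_real (cos (\<theta>$j) * sin (\<theta>$j) * (e j False - e j True)))"
  unfolding Gf_def form_prod by (rule prod.cong) (auto simp: cA1_def cA0_def algebra_simps)

lemma G10e: "Gf N (amp N (cA1 \<theta>)) (amp N (cA0 \<theta>)) (\<lambda>x. complex_of_real (\<Prod>j<N. e j (qbit x j)))
  = (\<Prod>j<N. \<i> * complex_of_real (cos (\<theta>$j) * sin (\<theta>$j) * (e j True - e j False)))"
  unfolding Gf_def form_prod by (rule prod.cong) (auto simp: cA1_def cA0_def algebra_simps)

lemma off_zero:
  assumes "j0 < N" "e j0 False = e j0 True"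
  shows "Gf N (amp N (cA0 \<theta>)) (amp N (cA1 \<theta>)) (\<lambda>x. complex_of_real (\<Prod>j<N. e j (qbit x j))) = 0"
    and "Gf N (amp N (cA1 \<theta>)) (amp N (cA0 \<theta>)) (\<lambda>x. complex_of_real (\<Prod>j<N. e j (qbit x j))) = 0"
  unfolding G01e G10e using assms by (auto simp: prod_zero_iff intro!: bexI[of _ j0])

lemma cs1: "j < N \<Longrightarrow> cos (\<theta>$j)^2 = (1 + \<beta> j) / 2" "j < N \<Longrightarrow> sin (\<theta>$j)^2 = (1 - \<beta> j) / 2"
  using cb sin_cos_squared_add[of "\<theta>$j"] by (auto simp: field_simps)

lemma diag_ez:
  assumes k: "k < N"
  shows "(\<Prod>j<N. cos (\<theta>$j)^2 * ez k j False + sin (\<theta>$j)^2 * ez k j True) = \<beta> k"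
    and "(\<Prod>j<N. sin (\<theta>$j)^2 * ez k j False + cos (\<theta>$j)^2 * ez k j True) = - \<beta> k"
proof -
  have "(\<Prod>j<N. cos (\<theta>$j)^2 * ez k j False + sin (\<theta>$j)^2 * ez k j True) = (\<Prod>j<N. if j = k then \<beta> k else 1)"
    by (rule prod.cong) (auto simp: ez_def cs1 field_simps)
  then show "(\<Prod>j<N. cos (\<theta>$j)^2 * ez k j False + sin (\<theta>$j)^2 * ez k j True) = \<beta> k"
    using k by (simp add: prod.delta)
  have "(\<Prod>j<N. sin (\<theta>$j)^2 * ez k j False + cos (\<theta>$j)^2 * ez k j True) = (\<Prod>j<N. if j = k then - \<beta> k else 1)"
    by (rule prod.cong) (auto simp: ez_def cs1 field_simps)
  then show "(\<Prod>j<N. sin (\<theta>$j)^2 * ez k j False + cos (\<theta>$j)^2 * ez k j True) = - \<beta> k"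
    using k by (simp add: prod.delta)
qed

lemma diag_one:
  shows "(\<Prod>j<N. cos (\<theta>$j)^2 * 1 + sin (\<theta>$j)^2 * 1) = 1"
    and "(\<Prod>j<N. sin (\<theta>$j)^2 * 1 + cos (\<theta>$j)^2 * 1) = 1"
  by (auto intro!: prod.neutral)

lemma diag_ezz:
  assumes k: "k < N" and l: "l < N"
  shows "(\<Prod>j<N. cos (\<theta>$j)^2 * (ez k j False * ez l j False) + sin (\<theta>$j)^2 * (ez k j True * ez l j True))
       = (\<Prod>j<N. sin (\<theta>$j)^2 * (ez k j False * ez l j False) + cos (\<theta>$j)^2 * (ez k j True * ez l j True))"
proof (cases "k = l")
  case True
  then show ?thesis by (simp add: ez_def)
next
  case False
  have "(\<Prod>j<N. cos (\<theta>$j)^2 * (ez k j False * ez l j False) + sin (\<theta>$j)^2 * (ez k j True * ez l j True))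
     = (\<Prod>j<N. (if j = k then \<beta> k else 1) * (if j = l then \<beta> l else 1))"
    by (rule prod.cong) (use False in \<open>auto simp: ez_def cs1 field_simps\<close>)
  also have "\<dots> = \<beta> k * \<beta> l" using k l by (simp add: prod.distrib prod.delta)
  also have "\<dots> = (\<Prod>j<N. (if j = k then - \<beta> k else 1) * (if j = l then - \<beta> l else 1))"
     using k l by (simp add: prod.distrib prod.delta)
  also have "\<dots> = (\<Prod>j<N. sin (\<theta>$j)^2 * (ez k j False * ez l j False) + cos (\<theta>$j)^2 * (ez k j True * ez l j True))"
    by (rule prod.cong) (use False in \<open>auto simp: ez_def cs1 field_simps\<close>)
  finally show ?thesis .
qed

end



lemma dg_carrier[simp]: "dg n f \<in> carrier_mat n n" by (simp add: dg_def)
lemma kb_carrier[simp]: "kb n a b \<in> carrier_mat n n" by (simp add: kb_def)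
lemma dg_dims[simp]: "dim_row (dg n f) = n" "dim_col (dg n f) = n" by (simp_all add: dg_def)
lemma kb_dims[simp]: "dim_row (kb n a b) = n" "dim_col (kb n a b) = n" by (simp_all add: kb_def)

lemma dg_add: "dg n f + dg n g = dg n (\<lambda>x. f x + g x)"
  by (rule eq_matI) (auto simp: dg_def)
lemma dg_smult: "c \<cdot>\<^sub>m dg n f = dg n (\<lambda>x. c * f x)"
  by (rule eq_matI) (auto simp: dg_def)
lemma dg_one: "1\<^sub>m n = dg n (\<lambda>x. 1)"
  by (rule eq_matI) (auto simp: dg_def)
lemma dg_zero: "0\<^sub>m n n = dg n (\<lambda>x. 0)"
  by (rule eq_matI) (auto simp: dg_def)
lemma dg_mult: "dg n f * dg n g = dg n (\<lambda>x. f x * g x)"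
proof (rule eq_matI)
  fix i j assume "i < dim_row (dg n (\<lambda>x. f x * g x))" "j < dim_col (dg n (\<lambda>x. f x * g x))"
  then have i: "i < n" and j: "j < n" by auto
  have "(dg n f * dg n g) $$ (i, j) = (\<Sum>k\<in>{0..<n}. (if i = k then f i else 0) * (if k = j then g k else 0))"
    using i j by (simp add: dg_def scalar_prod_def)
  also have "\<dots> = (\<Sum>k\<in>{0..<n}. if k = i then (if i = j then f i * g i else 0) else 0)"
    by (rule sum.cong) auto
  also have "\<dots> = (if i = j then f i * g i else 0)" using i by (simp add: sum.delta)
  finally show "(dg n f * dg n g) $$ (i, j) = dg n (\<lambda>x. f x * g x) $$ (i, j)" using i j by (simp add: dg_def)
qed auto

lemma msum_dg: "msum n (\<lambda>i. dg n (f i)) k = dg n (\<lambda>x. \<Sum>i<k. f i x)"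
  by (induction k) (simp_all add: dg_zero dg_add)

lemma msum_cong: "(\<And>i. i < k \<Longrightarrow> f i = g i) \<Longrightarrow> msum n f k = msum n g k"
  by (induction k) auto

lemma Zq_dg: "Zq N j = dg (2^N) (\<lambda>x. complex_of_real (zz j x))"
  unfolding Zq_def dg_def zz_def by (rule eq_matI) auto

lemma dotZ_dg: "dotZ N v = dg (2^N) (\<lambda>x. \<Sum>j<N. complex_of_real (v $ j) * complex_of_real (zz j x))"
  unfolding dotZ_def Zq_dg dg_smult msum_dg ..


lemma Gf_add: "Gf N u w (\<lambda>x. f x + g x) = Gf N u w f + Gf N u w g"
  by (simp add: Gf_def algebra_simps sum.distrib)
lemma Gf_mult: "Gf N u w (\<lambda>x. c * f x) = c * Gf N u w f"
  by (simp add: Gf_def algebra_simps sum_distrib_left)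
lemma Gf_sum: "Gf N u w (\<lambda>x. \<Sum>i\<in>A. f i x) = (\<Sum>i\<in>A. Gf N u w (f i))"
  unfolding Gf_def by (simp add: sum_distrib_left sum_distrib_right algebra_simps) (rule sum.swap)

lemma PDP:
  "(kb n a a + kb n b b) * dg n f * (kb n a a + kb n b b) =
     Gf' \<cdot>\<^sub>m kb n a a + Gf'' \<cdot>\<^sub>m kb n a b + Gf''' \<cdot>\<^sub>m kb n b a + Gf'''' \<cdot>\<^sub>m kb n b b"
  if "Gf' = (\<Sum>k<n. cnj (a k) * f k * a k)" "Gf'' = (\<Sum>k<n. cnj (a k) * f k * b k)"
     "Gf''' = (\<Sum>k<n. cnj (b k) * f k * a k)" "Gf'''' = (\<Sum>k<n. cnj (b k) * f k * b k)"
proof -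
  have "(kb n a a + kb n b b) * dg n f * (kb n a a + kb n b b)
     = kb n a a * dg n f * kb n a a + kb n a a * dg n f * kb n b b + kb n b b * dg n f * kb n a a + kb n b b * dg n f * kb n b b"
  proof -
    let ?A = "kb n a a" and ?B = "kb n b b" and ?D = "dg n f"
    have 1: "(?A + ?B) * ?D = ?A * ?D + ?B * ?D" by (rule add_mult_distrib_mat[of _ n n]) auto
    have 2: "(?A * ?D + ?B * ?D) * (?A + ?B) = (?A * ?D + ?B * ?D) * ?A + (?A * ?D + ?B * ?D) * ?B"
      by (rule mult_add_distrib_mat[of _ n n]) auto
    have 3: "(?A * ?D + ?B * ?D) * ?A = ?A * ?D * ?A + ?B * ?D * ?A" by (rule add_mult_distrib_mat[of _ n n]) auto
    have 4: "(?A * ?D + ?B * ?D) * ?B = ?A * ?D * ?B + ?B * ?D * ?B" by (rule add_mult_distrib_mat[of _ n n]) auto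
    have c: "?A * ?D * ?A \<in> carrier_mat n n" "?A * ?D * ?B \<in> carrier_mat n n"
       "?B * ?D * ?A \<in> carrier_mat n n" "?B * ?D * ?B \<in> carrier_mat n n" by auto
    show ?thesis unfolding 1 2 3 4 using c by (intro eq_matI) (simp_all add: algebra_simps)
  qed
  then show ?thesis unfolding sandwich that by simp
qed




context
  fixes N :: nat and \<theta> :: "real vec" and \<beta> :: "nat \<Rightarrow> real"
  assumes N3: "3 \<le> N"
  and cb: "\<forall>j<N. cos (\<theta> $ j)^2 - sin (\<theta> $ j)^2 = \<beta> j"
begin

abbreviation "a0 \<equiv> amp N (cA0 \<theta>)"
abbreviation "a1 \<equiv> amp N (cA1 \<theta>)"

lemma fun1: "(\<lambda>x. 1::complex) = (\<lambda>x. complex_of_real (\<Prod>j<N. (\<lambda>j b. 1) j (qbit x j)))" by simp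
lemma funz: "k < N \<Longrightarrow> (\<lambda>x. complex_of_real (zz k x)) = (\<lambda>x. complex_of_real (\<Prod>j<N. ez k j (qbit x j)))"
  by (simp add: zz_prod)
lemma funzz: "k < N \<Longrightarrow> l < N \<Longrightarrow> (\<lambda>x. complex_of_real (zz k x * zz l x))
   = (\<lambda>x. complex_of_real (\<Prod>j<N. (\<lambda>j b. ez k j b * ez l j b) j (qbit x j)))"
  by (simp add: zz2_prod)

lemma vals1: "Gf N a0 a0 (\<lambda>x. 1) = 1" "Gf N a1 a1 (\<lambda>x. 1) = 1"
  "Gf N a0 a1 (\<lambda>x. 1) = 0" "Gf N a1 a0 (\<lambda>x. 1) = 0"
proof -
  show "Gf N a0 a0 (\<lambda>x. 1) = 1" using G00e[OF cb, of "\<lambda>j b. 1"] diag_one[OF cb] by simp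
  show "Gf N a1 a1 (\<lambda>x. 1) = 1" using G11e[OF cb, of "\<lambda>j b. 1"] diag_one[OF cb] by simp
  show "Gf N a0 a1 (\<lambda>x. 1) = 0" unfolding fun1 by (rule off_zero[OF cb, of 0]) (use N3 in auto)
  show "Gf N a1 a0 (\<lambda>x. 1) = 0" unfolding fun1 by (rule off_zero[OF cb, of 0]) (use N3 in auto)
qed

lemma exj: "k < N \<Longrightarrow> l < N \<Longrightarrow> \<exists>j<N. j \<noteq> k \<and> j \<noteq> l"
proof -
  have "\<exists>j\<in>{0,1,2::nat}. j \<noteq> k \<and> j \<noteq> l" by auto
  then show ?thesis using N3 by force
qed

lemma valsz: assumes k: "k < N"
  shows "Gf N a0 a0 (\<lambda>x. complex_of_real (zz k x)) = complex_of_real (\<beta> k)"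
    "Gf N a1 a1 (\<lambda>x. complex_of_real (zz k x)) = - complex_of_real (\<beta> k)"
    "Gf N a0 a1 (\<lambda>x. complex_of_real (zz k x)) = 0"
    "Gf N a1 a0 (\<lambda>x. complex_of_real (zz k x)) = 0"
proof -
  obtain j where j: "j < N" "j \<noteq> k" using exj[OF k k] by auto
  show "Gf N a0 a0 (\<lambda>x. complex_of_real (zz k x)) = complex_of_real (\<beta> k)"
    unfolding funz[OF k] G00e[OF cb] diag_ez[OF cb k] ..
  show "Gf N a1 a1 (\<lambda>x. complex_of_real (zz k x)) = - complex_of_real (\<beta> k)"
    unfolding funz[OF k] G11e[OF cb] diag_ez[OF cb k] by simp
  show "Gf N a0 a1 (\<lambda>x. complex_of_real (zz k x)) = 0" unfolding funz[OF k]
    by (rule off_zero[OF cb, of j]) (use j in \<open>auto simp: ez_def\<close>)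
  show "Gf N a1 a0 (\<lambda>x. complex_of_real (zz k x)) = 0" unfolding funz[OF k]
    by (rule off_zero[OF cb, of j]) (use j in \<open>auto simp: ez_def\<close>)
qed

definition "dd k l = (\<Prod>j<N. cos (\<theta>$j)^2 * (ez k j False * ez l j False) + sin (\<theta>$j)^2 * (ez k j True * ez l j True))"

lemma valszz: assumes k: "k < N" and l: "l < N"
  shows "Gf N a0 a0 (\<lambda>x. complex_of_real (zz k x * zz l x)) = complex_of_real (dd k l)"
    "Gf N a1 a1 (\<lambda>x. complex_of_real (zz k x * zz l x)) = complex_of_real (dd k l)"
    "Gf N a0 a1 (\<lambda>x. complex_of_real (zz k x * zz l x)) = 0"
    "Gf N a1 a0 (\<lambda>x. complex_of_real (zz k x * zz l x)) = 0"
proof -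
  obtain j where j: "j < N" "j \<noteq> k" "j \<noteq> l" using exj[OF k l] by auto
  show "Gf N a0 a0 (\<lambda>x. complex_of_real (zz k x * zz l x)) = complex_of_real (dd k l)"
    unfolding funzz[OF k l] using G00e[OF cb, of "\<lambda>j b. ez k j b * ez l j b"] by (simp add: dd_def)
  show "Gf N a1 a1 (\<lambda>x. complex_of_real (zz k x * zz l x)) = complex_of_real (dd k l)"
    unfolding funzz[OF k l] using G11e[OF cb, of "\<lambda>j b. ez k j b * ez l j b"] diag_ezz[OF cb k l] by (simp add: dd_def)
  show "Gf N a0 a1 (\<lambda>x. complex_of_real (zz k x * zz l x)) = 0" unfolding funzz[OF k l]
    by (rule off_zero[OF cb, of j]) (use j in \<open>auto simp: ez_def\<close>)
  show "Gf N a1 a0 (\<lambda>x. complex_of_real (zz k x * zz l x)) = 0" unfolding funzz[OF k l]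
    by (rule off_zero[OF cb, of j]) (use j in \<open>auto simp: ez_def\<close>)
qed

lemma codeP_kb: "codeP N \<theta> = kb (2^N) a0 a0 + kb (2^N) a1 a1"
  unfolding codeP_def ket0L_amp ket1L_amp ketbra_kb ..
lemma codeZL_kb: "codeZL N \<theta> = kb (2^N) a0 a0 - kb (2^N) a1 a1"
  unfolding codeZL_def ket0L_amp ket1L_amp ketbra_kb ..

lemma PDP_gen: assumes "Gf N a0 a1 f = 0" "Gf N a1 a0 f = 0" "Gf N a0 a0 f = c0" "Gf N a1 a1 f = c1"
  shows "codeP N \<theta> * dg (2^N) f * codeP N \<theta> = c0 \<cdot>\<^sub>m kb (2^N) a0 a0 + c1 \<cdot>\<^sub>m kb (2^N) a1 a1"
proof -
  have "codeP N \<theta> * dg (2^N) f * codeP N \<theta> = c0 \<cdot>\<^sub>m kb (2^N) a0 a0 + 0 \<cdot>\<^sub>m kb (2^N) a0 a1 + 0 \<cdot>\<^sub>m kb (2^N) a1 a0 + c1 \<cdot>\<^sub>m kb (2^N) a1 a1"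
    unfolding codeP_kb by (rule PDP) (use assms in \<open>simp_all add: Gf_def\<close>)
  also have "\<dots> = c0 \<cdot>\<^sub>m kb (2^N) a0 a0 + c1 \<cdot>\<^sub>m kb (2^N) a1 a1"
    by (rule eq_matI) auto
  finally show ?thesis .
qed

lemma sum2_cong: "(\<And>k. k < N \<Longrightarrow> g k = h k) \<Longrightarrow> (\<Sum>i<N. \<Sum>k<N. X i k * g k) = (\<Sum>i<N. \<Sum>k<N. X i k * h k)"
  by (intro sum.cong refl) auto
lemma sum4_cong: "(\<And>k l. k < N \<Longrightarrow> l < N \<Longrightarrow> g k l = h k l) \<Longrightarrow>
  (\<Sum>i<N. \<Sum>j<N. \<Sum>l<N. \<Sum>k<N. Y i j l k * g k l) = (\<Sum>i<N. \<Sum>j<N. \<Sum>l<N. \<Sum>k<N. Y i j l k * h k l)"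
  by (intro sum.cong refl) auto

lemma PSP:
  fixes v :: "nat \<Rightarrow> real vec" and lam :: "nat \<Rightarrow> real"
  assumes lin0: "\<forall>i<N. sqrt (lam i) * (\<Sum>k<N. v i $ k * \<beta> k) = 0"
    and S: "S \<in> lindblad_span N (\<lambda>j. complex_of_real (sqrt (lam j)) \<cdot>\<^sub>m dotZ N (v j))"
  shows "\<exists>r::real. codeP N \<theta> * S * codeP N \<theta> = complex_of_real r \<cdot>\<^sub>m codeP N \<theta>"
proof -
  obtain a b c where Sabc: "S = complex_of_real a \<cdot>\<^sub>m 1\<^sub>m (2^N)
        + msum (2^N) (\<lambda>i. complex_of_real (b i) \<cdot>\<^sub>m (\<lambda>j. complex_of_real (sqrt (lam j)) \<cdot>\<^sub>m dotZ N (v j)) i) N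
        + msum (2^N) (\<lambda>i. msum (2^N) (\<lambda>j. complex_of_real (c i j) \<cdot>\<^sub>m ((\<lambda>j. complex_of_real (sqrt (lam j)) \<cdot>\<^sub>m dotZ N (v j)) i * (\<lambda>j. complex_of_real (sqrt (lam j)) \<cdot>\<^sub>m dotZ N (v j)) j)) N) N"
    using S unfolding lindblad_span_def by blast
  define Lf where "Lf i x = complex_of_real (sqrt (lam i)) * (\<Sum>j<N. complex_of_real (v i $ j) * complex_of_real (zz j x))" for i x
  have L: "complex_of_real (sqrt (lam j)) \<cdot>\<^sub>m dotZ N (v j) = dg (2^N) (Lf j)" for j
    unfolding dotZ_dg dg_smult Lf_def ..
  define f where "f x = complex_of_real a * 1 + (\<Sum>i<N. complex_of_real (b i) * Lf i x)
     + (\<Sum>i<N. \<Sum>j<N. complex_of_real (c i j) * (Lf i x * Lf j x))" for x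
  have Sdg: "S = dg (2^N) f"
    unfolding Sabc L f_def by (simp only: dg_mult dg_smult msum_dg dg_one dg_add)
  have fe: "f = (\<lambda>x. complex_of_real a * 1
     + (\<Sum>i<N. \<Sum>k<N. complex_of_real (b i * sqrt (lam i) * v i $ k) * complex_of_real (zz k x))
     + (\<Sum>i<N. \<Sum>j<N. \<Sum>l<N. \<Sum>k<N. complex_of_real (c i j * sqrt (lam i) * sqrt (lam j) * v i $ k * v j $ l) * complex_of_real (zz k x * zz l x)))"
    unfolding f_def Lf_def by (auto simp: sum_distrib_left sum_product algebra_simps)
  have Gexp: "Gf N u w f = complex_of_real a * Gf N u w (\<lambda>x. 1)
     + (\<Sum>i<N. \<Sum>k<N. complex_of_real (b i * sqrt (lam i) * v i $ k) * Gf N u w (\<lambda>x. complex_of_real (zz k x)))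
     + (\<Sum>i<N. \<Sum>j<N. \<Sum>l<N. \<Sum>k<N. complex_of_real (c i j * sqrt (lam i) * sqrt (lam j) * v i $ k * v j $ l) * Gf N u w (\<lambda>x. complex_of_real (zz k x * zz l x)))" for u w
    unfolding fe by (simp only: Gf_add Gf_mult Gf_sum)
  have lin: "(\<Sum>i<N. \<Sum>k<N. complex_of_real (b i * sqrt (lam i) * v i $ k) * complex_of_real (\<beta> k)) = 0"
  proof -
    have "(\<Sum>i<N. \<Sum>k<N. complex_of_real (b i * sqrt (lam i) * v i $ k) * complex_of_real (\<beta> k))
       = complex_of_real (\<Sum>i<N. b i * (sqrt (lam i) * (\<Sum>k<N. v i $ k * \<beta> k)))"
      by (simp add: sum_distrib_left mult.assoc)
    also have "\<dots> = 0"
    proof -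
      have z: "(\<Sum>i<N. b i * (sqrt (lam i) * (\<Sum>k<N. v i $ k * \<beta> k))) = 0" using lin0 by (intro sum.neutral) auto
      show ?thesis by (simp only: z of_real_0)
    qed
    finally show ?thesis .
  qed
  have gen: "Gf N u w f = complex_of_real a * Gf N u w (\<lambda>x. 1)
     + (\<Sum>i<N. \<Sum>k<N. complex_of_real (b i * sqrt (lam i) * v i $ k) * g1 k)
     + (\<Sum>i<N. \<Sum>j<N. \<Sum>l<N. \<Sum>k<N. complex_of_real (c i j * sqrt (lam i) * sqrt (lam j) * v i $ k * v j $ l) * g2 k l)"
    if h1: "\<And>k. k < N \<Longrightarrow> Gf N u w (\<lambda>x. complex_of_real (zz k x)) = g1 k"
    and h2: "\<And>k l. k < N \<Longrightarrow> l < N \<Longrightarrow> Gf N u w (\<lambda>x. complex_of_real (zz k x * zz l x)) = g2 k l" for u w g1 g2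
  proof -
    have e1: "(\<Sum>i<N. \<Sum>k<N. complex_of_real (b i * sqrt (lam i) * v i $ k) * Gf N u w (\<lambda>x. complex_of_real (zz k x)))
        = (\<Sum>i<N. \<Sum>k<N. complex_of_real (b i * sqrt (lam i) * v i $ k) * g1 k)"
      by (intro sum.cong refl) (simp add: h1)
    have e2: "(\<Sum>i<N. \<Sum>j<N. \<Sum>l<N. \<Sum>k<N. complex_of_real (c i j * sqrt (lam i) * sqrt (lam j) * v i $ k * v j $ l) * Gf N u w (\<lambda>x. complex_of_real (zz k x * zz l x)))
        = (\<Sum>i<N. \<Sum>j<N. \<Sum>l<N. \<Sum>k<N. complex_of_real (c i j * sqrt (lam i) * sqrt (lam j) * v i $ k * v j $ l) * g2 k l)"
      by (intro sum.cong refl) (simp add: h2 del: of_real_mult)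
    show ?thesis unfolding Gexp e1 e2 ..
  qed
  define r where "r = a + (\<Sum>i<N. \<Sum>j<N. \<Sum>l<N. \<Sum>k<N. c i j * sqrt (lam i) * sqrt (lam j) * v i $ k * v j $ l * dd k l)"
  have G00: "Gf N a0 a0 f = complex_of_real r"
  proof -
    note g = gen[OF valsz(1) valszz(1)]
    show ?thesis unfolding r_def by (subst g, simp_all only: vals1 lin, simp_all)
  qed
  have G11: "Gf N a1 a1 f = complex_of_real r"
  proof -
    have "(\<Sum>i<N. \<Sum>k<N. complex_of_real (b i * sqrt (lam i) * v i $ k) * - complex_of_real (\<beta> k)) = 0"
      using lin by (simp add: sum_negf)
    note l = this
    note g = gen[OF valsz(2) valszz(2)]
    show ?thesis unfolding r_def by (subst g, simp_all only: vals1 l, simp_all)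
  qed
  have G01: "Gf N a0 a1 f = 0" by (subst gen[OF valsz(3) valszz(3)], simp_all add: vals1)
  have G10: "Gf N a1 a0 f = 0" by (subst gen[OF valsz(4) valszz(4)], simp_all add: vals1)
  have "codeP N \<theta> * S * codeP N \<theta> = complex_of_real r \<cdot>\<^sub>m kb (2^N) a0 a0 + complex_of_real r \<cdot>\<^sub>m kb (2^N) a1 a1"
    unfolding Sdg by (rule PDP_gen[OF G01 G10 G00 G11])
  also have "\<dots> = complex_of_real r \<cdot>\<^sub>m codeP N \<theta>"
    unfolding codeP_kb by (rule eq_matI) (auto simp: algebra_simps)
  finally show ?thesis by blast
qed

lemma PHP:
  fixes h :: "real vec"
  shows "codeP N \<theta> * (complex_of_real (1/2) \<cdot>\<^sub>m dotZ N h) * codeP N \<theta>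
     = complex_of_real ((1/2) * (\<Sum>k<N. h $ k * \<beta> k)) \<cdot>\<^sub>m codeZL N \<theta>"
proof -
  define f where "f x = complex_of_real (1/2) * (\<Sum>k<N. complex_of_real (h $ k) * complex_of_real (zz k x))" for x
  have Hdg: "complex_of_real (1/2) \<cdot>\<^sub>m dotZ N h = dg (2^N) f"
    unfolding dotZ_dg dg_smult f_def ..
  have gen: "Gf N u w f = complex_of_real (1/2) * (\<Sum>k<N. complex_of_real (h $ k) * g1 k)"
    if h1: "\<And>k. k < N \<Longrightarrow> Gf N u w (\<lambda>x. complex_of_real (zz k x)) = g1 k" for u w g1
  proof -
    have "Gf N u w f = complex_of_real (1/2) * (\<Sum>k<N. complex_of_real (h $ k) * Gf N u w (\<lambda>x. complex_of_real (zz k x)))"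
      unfolding f_def by (simp only: Gf_mult Gf_sum)
    also have "\<dots> = complex_of_real (1/2) * (\<Sum>k<N. complex_of_real (h $ k) * g1 k)"
      by (intro arg_cong[where f="\<lambda>t. _ * t"] sum.cong refl) (simp add: h1)
    finally show ?thesis .
  qed
  let ?c = "complex_of_real ((1/2) * (\<Sum>k<N. h $ k * \<beta> k))"
  have G00: "Gf N a0 a0 f = ?c" by (subst gen[OF valsz(1)], simp_all)
  have G11: "Gf N a1 a1 f = - ?c" by (subst gen[OF valsz(2)], simp_all add: sum_negf)
  have G01: "Gf N a0 a1 f = 0" by (subst gen[OF valsz(3)], simp_all)
  have G10: "Gf N a1 a0 f = 0" by (subst gen[OF valsz(4)], simp_all)
  have "codeP N \<theta> * dg (2^N) f * codeP N \<theta> = ?c \<cdot>\<^sub>m kb (2^N) a0 a0 + (- ?c) \<cdot>\<^sub>m kb (2^N) a1 a1"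
    by (rule PDP_gen[OF G01 G10 G00 G11])
  also have "\<dots> = ?c \<cdot>\<^sub>m codeZL N \<theta>"
    unfolding codeZL_kb by (rule eq_matI) (auto simp: algebra_simps)
  finally show ?thesis unfolding Hdg .
qed

lemma Qval:
  "(\<Sum>x<2^N. \<Sum>y<2^N. cnj (u x) * (\<alpha> \<cdot>\<^sub>m kb (2^N) a0 a0 + \<beta>' \<cdot>\<^sub>m kb (2^N) a1 a1) $$ (x, y) * u y)
    = \<alpha> * (Gf N u a0 (\<lambda>x. 1) * Gf N a0 u (\<lambda>x. 1)) + \<beta>' * (Gf N u a1 (\<lambda>x. 1) * Gf N a1 u (\<lambda>x. 1))"
proof -
  have "(\<Sum>x<2^N. \<Sum>y<2^N. cnj (u x) * (\<alpha> \<cdot>\<^sub>m kb (2^N) a0 a0 + \<beta>' \<cdot>\<^sub>m kb (2^N) a1 a1) $$ (x, y) * u y)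
     = (\<Sum>x<2^N. \<Sum>y<2^N. \<alpha> * ((cnj (u x) * a0 x) * (cnj (a0 y) * u y)) + \<beta>' * ((cnj (u x) * a1 x) * (cnj (a1 y) * u y)))"
    by (intro sum.cong refl) (simp add: kb_def algebra_simps)
  also have "\<dots> = \<alpha> * (Gf N u a0 (\<lambda>x. 1) * Gf N a0 u (\<lambda>x. 1)) + \<beta>' * (Gf N u a1 (\<lambda>x. 1) * Gf N a1 u (\<lambda>x. 1))"
    by (simp add: Gf_def sum.distrib sum_distrib_left sum_distrib_right mult_ac)
  finally show ?thesis .
qed

lemma nonprop:
  assumes c0: "c0 \<noteq> 0"
  shows "\<not> (\<exists>c. c0 \<cdot>\<^sub>m codeZL N \<theta> = c \<cdot>\<^sub>m codeP N \<theta>)"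
proof
  assume "\<exists>c. c0 \<cdot>\<^sub>m codeZL N \<theta> = c \<cdot>\<^sub>m codeP N \<theta>"
  then obtain c where eq: "c0 \<cdot>\<^sub>m codeZL N \<theta> = c \<cdot>\<^sub>m codeP N \<theta>" by blast
  have e1: "c0 \<cdot>\<^sub>m codeZL N \<theta> = c0 \<cdot>\<^sub>m kb (2^N) a0 a0 + (- c0) \<cdot>\<^sub>m kb (2^N) a1 a1"
    unfolding codeZL_kb by (rule eq_matI) (auto simp: algebra_simps)
  have e2: "c \<cdot>\<^sub>m codeP N \<theta> = c \<cdot>\<^sub>m kb (2^N) a0 a0 + c \<cdot>\<^sub>m kb (2^N) a1 a1"
    unfolding codeP_kb by (rule eq_matI) (auto simp: algebra_simps)
  have "c0 = c" using arg_cong[OF eq, of "\<lambda>M. \<Sum>x<2^N. \<Sum>y<2^N. cnj (a0 x) * M $$ (x, y) * a0 y"]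
    unfolding e1 e2 Qval vals1 by simp
  moreover have "- c0 = c" using arg_cong[OF eq, of "\<lambda>M. \<Sum>x<2^N. \<Sum>y<2^N. cnj (a1 x) * M $$ (x, y) * a1 y"]
    unfolding e1 e2 Qval vals1 by simp
  ultimately show False using c0 by simp
qed

end



lemma ker1:
  fixes C :: "real mat"
  assumes C: "C \<in> carrier_mat N N" and kd: "kernel_dim C = 1"
    and p: "p \<in> mat_kernel C" and p0: "p \<noteq> 0\<^sub>v N" and b: "b \<in> mat_kernel C"
  shows "\<exists>t. b = t \<cdot>\<^sub>v p"
proof -
  interpret kernel N N C by (unfold_locales, rule C)
  obtain B where B: "finite B" "basis B" using kernel_basis_exists[OF C] by auto
  have "card B = 1" using Ker.dim_basis[OF B] kd by simp
  then obtain u where Bu: "B = {u}" using card_1_singletonE by blast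
  have gen: "span {u} = mat_kernel C" and uin: "u \<in> mat_kernel C" using B(2) unfolding Bu Ker.basis_def by auto
  have sp: "\<exists>a. x = a \<cdot>\<^sub>v u" if "x \<in> mat_kernel C" for x
  proof -
    from Ker.finite_in_span[of "{u}" x] that gen uin obtain a where "lincomb a {u} = x" by auto
    then show ?thesis unfolding Ker.lincomb_def using uin mat_kernel_carrier[OF C] by auto
  qed
  obtain a where a: "p = a \<cdot>\<^sub>v u" using sp p by auto
  obtain c where c: "b = c \<cdot>\<^sub>v u" using sp b by auto
  have a0: "a \<noteq> 0" using a p0 uin mat_kernel_carrier[OF C] by auto
  have "b = (c / a) \<cdot>\<^sub>v p" unfolding a c using a0 by (simp add: smult_smult_assoc)
  then show ?thesis by blast
qed

theorem mainTheorem6: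
  fixes N :: nat and h :: "real vec" and C :: "real mat"
    and v :: "nat \<Rightarrow> real vec" and lam :: "nat \<Rightarrow> real"
    and p :: "real vec" and \<gamma> :: real
  assumes N3: "N \<ge> 3"
    and h_dim: "h \<in> carrier_vec N"
    and C_dim: "C \<in> carrier_mat N N"
    and C_sym: "C\<^sup>T = C"
    and C_psd: "\<forall>x\<in>carrier_vec N. x \<bullet> (C *\<^sub>v x) \<ge> 0"
    and v_dim: "\<forall>i<N. v i \<in> carrier_vec N"
    and v_orthonormal: "\<forall>i<N. \<forall>j<N. v i \<bullet> v j = (if i = j then 1 else 0)"
    and v_eigen: "\<forall>i<N. C *\<^sub>v v i = lam i \<cdot>\<^sub>v v i"
    and lam_nonneg: "\<forall>i<N. lam i \<ge> 0"
    and h_notin_col: "h \<notin> colspace C"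
    and p_proj: "is_orth_proj (mat_kernel C) h p"
    and \<gamma>_range: "0 < \<bar>\<gamma>\<bar>" "\<bar>\<gamma>\<bar> \<le> 1 / linf_norm p"
  defines "bt \<equiv> \<gamma> \<cdot>\<^sub>v p"
    and "\<theta> \<equiv> vec N (\<lambda>j. arccos ((\<gamma> \<cdot>\<^sub>v p) $ j) / 2)"
    and "H \<equiv> complex_of_real (1/2) \<cdot>\<^sub>m dotZ N h"
    and "L \<equiv> (\<lambda>j. complex_of_real (sqrt (lam j)) \<cdot>\<^sub>m dotZ N (v j))"
    and "P \<equiv> codeP N (vec N (\<lambda>j. arccos ((\<gamma> \<cdot>\<^sub>v p) $ j) / 2))"
  shows "(\<forall>S\<in>lindblad_span N L. \<exists>r::real. P * S * P = complex_of_real r \<cdot>\<^sub>m P)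
       \<and> P * H * P = complex_of_real (\<gamma> / 2 * (p \<bullet> p)) \<cdot>\<^sub>m codeZL N \<theta>
       \<and> \<not> (\<exists>c::complex. P * H * P = c \<cdot>\<^sub>m P)
       \<and> ((kernel_dim C = 1 \<and> \<gamma> = 1 / linf_norm p) \<longrightarrow>
            ((\<forall>i<N. \<bar>bt $ i\<bar> \<le> 1) \<and> (\<forall>w\<in>colspace C. bt \<bullet> w = 0)
             \<and> (\<forall>b\<in>carrier_vec N. (\<forall>i<N. \<bar>b $ i\<bar> \<le> 1) \<and> (\<forall>w\<in>colspace C. b \<bullet> w = 0)
                    \<longrightarrow> b \<bullet> h \<le> bt \<bullet> h)))"
proof -
  have pK: "p \<in> carrier_vec N" "C *\<^sub>v p = 0\<^sub>v N"
    using p_proj mat_kernelD[OF C_dim] unfolding is_orth_proj_def by auto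
  have hp: "(h - p) \<bullet> p = 0" using p_proj unfolding is_orth_proj_def by auto
  have hpp: "h \<bullet> p = p \<bullet> p" using hp minus_scalar_prod_distrib[OF h_dim pK(1) pK(1)] by simp
  have dimp: "dim_vec p = N" using pK(1) by simp
  define m where "m = linf_norm p"
  have m_def': "m = Max ((\<lambda>i. \<bar>p $ i\<bar>) ` {0..<N})" unfolding m_def linf_norm_def dimp ..
  have fin: "finite ((\<lambda>i. \<bar>p $ i\<bar>) ` {0..<N})" and ne: "(\<lambda>i. \<bar>p $ i\<bar>) ` {0..<N} \<noteq> {}" using N3 by auto
  have pm: "\<bar>p $ i\<bar> \<le> m" if "i < N" for i unfolding m_def' using that fin by (intro Max_ge) auto
  obtain i0 where i0: "i0 < N" "\<bar>p $ i0\<bar> = m"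
    using Max_in[OF fin ne] unfolding m_def'[symmetric] by auto
  have m0: "m \<noteq> 0" using \<gamma>_range unfolding m_def[symmetric] by auto
  have mpos: "m > 0" using m0 i0 by (metis abs_ge_zero order_le_less)
  define \<beta> where "\<beta> j = \<gamma> * p $ j" for j
  have \<beta>_eq: "(\<gamma> \<cdot>\<^sub>v p) $ j = \<beta> j" if "j < N" for j using that pK(1) by (simp add: \<beta>_def)
  have \<beta>b: "\<bar>\<beta> j\<bar> \<le> 1" if "j < N" for j
  proof -
    have "\<bar>\<beta> j\<bar> = \<bar>\<gamma>\<bar> * \<bar>p $ j\<bar>" by (simp add: \<beta>_def abs_mult)
    also have "\<dots> \<le> (1 / m) * m" using \<gamma>_range(2) pm[OF that] mpos unfolding m_def[symmetric]
      by (intro mult_mono) auto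
    finally show ?thesis using mpos by simp
  qed
  have th: "\<theta> $ j = arccos (\<beta> j) / 2" if "j < N" for j using that \<beta>_eq unfolding \<theta>_def by simp
  have cb: "\<forall>j<N. cos (\<theta> $ j)^2 - sin (\<theta> $ j)^2 = \<beta> j"
  proof (intro allI impI)
    fix j assume j: "j < N"
    have "cos (\<theta> $ j)^2 - sin (\<theta> $ j)^2 = cos (2 * (\<theta> $ j))" by (simp add: cos_double)
    also have "\<dots> = \<beta> j"
    proof -
      have "2 * (\<theta> $ j) = arccos (\<beta> j)" using th[OF j] by simp
      then show ?thesis using \<beta>b[OF j] by (simp add: cos_arccos_abs)
    qed
    finally show "cos (\<theta> $ j)^2 - sin (\<theta> $ j)^2 = \<beta> j" .
  qed
  have Pth: "P = codeP N \<theta>" unfolding P_def \<theta>_def ..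
  have pC: "p \<bullet> (C *\<^sub>v x) = 0" if "x \<in> carrier_vec N" for x
    using transpose_vec_mult_scalar[OF C_dim that pK(1)] C_sym pK(2) that by simp
  have lin0: "\<forall>i<N. sqrt (lam i) * (\<Sum>k<N. v i $ k * \<beta> k) = 0"
  proof (intro allI impI)
    fix i assume i: "i < N"
    have vi: "v i \<in> carrier_vec N" using v_dim i by auto
    have "p \<bullet> (C *\<^sub>v v i) = lam i * (p \<bullet> v i)" using v_eigen i vi pK(1) by simp
    then have "lam i * (p \<bullet> v i) = 0" using pC[OF vi] by simp
    moreover have "(\<Sum>k<N. v i $ k * \<beta> k) = \<gamma> * (p \<bullet> v i)"
      using comm_scalar_prod[OF vi pK(1)] vi
      by (simp add: scalar_prod_def \<beta>_def sum_distrib_left lessThan_atLeast0 algebra_simps)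
    ultimately show "sqrt (lam i) * (\<Sum>k<N. v i $ k * \<beta> k) = 0" by auto
  qed
  have pp0: "p \<bullet> p > 0"
  proof -
    have "p \<bullet> p = (\<Sum>i\<in>{0..<N}. p $ i * p $ i)" unfolding scalar_prod_def dimp ..
    also have "\<dots> \<ge> p $ i0 * p $ i0" using i0 by (intro member_le_sum) auto
    moreover have "p $ i0 * p $ i0 > 0"
    proof -
      have nz: "p $ i0 \<noteq> 0" using i0 mpos by auto
      show ?thesis using nz by (cases "p $ i0 > 0") (auto intro: mult_pos_pos mult_neg_neg)
    qed
    ultimately show ?thesis by linarith
  qed
  have part1: "\<forall>S\<in>lindblad_span N L. \<exists>r::real. P * S * P = complex_of_real r \<cdot>\<^sub>m P"
    unfolding Pth L_def using PSP[OF N3 cb lin0] by blast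
  have hsum: "(1/2) * (\<Sum>k<N. h $ k * \<beta> k) = \<gamma> / 2 * (p \<bullet> p)"
  proof -
    have "(\<Sum>k<N. h $ k * \<beta> k) = \<gamma> * (h \<bullet> p)"
      using pK(1) by (simp add: scalar_prod_def \<beta>_def sum_distrib_left lessThan_atLeast0 algebra_simps)
    then show ?thesis using hpp by simp
  qed
  have part2: "P * H * P = complex_of_real (\<gamma> / 2 * (p \<bullet> p)) \<cdot>\<^sub>m codeZL N \<theta>"
    unfolding Pth H_def PHP[OF N3 cb] hsum ..
  have part3: "\<not> (\<exists>c::complex. P * H * P = c \<cdot>\<^sub>m P)"
  proof -
    have c0: "complex_of_real (\<gamma> / 2 * (p \<bullet> p)) \<noteq> 0" using pp0 \<gamma>_range(1) by simp
    show ?thesis using nonprop[OF N3 cb c0] part2 unfolding Pth by simp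
  qed
  have part4: "(\<forall>i<N. \<bar>bt $ i\<bar> \<le> 1) \<and> (\<forall>w\<in>colspace C. bt \<bullet> w = 0)
             \<and> (\<forall>b\<in>carrier_vec N. (\<forall>i<N. \<bar>b $ i\<bar> \<le> 1) \<and> (\<forall>w\<in>colspace C. b \<bullet> w = 0)
                    \<longrightarrow> b \<bullet> h \<le> bt \<bullet> h)" if kd: "kernel_dim C = 1" and g: "\<gamma> = 1 / linf_norm p"
  proof (intro conjI allI impI ballI)
    fix i assume "i < N" then show "\<bar>bt $ i\<bar> \<le> 1" using \<beta>b \<beta>_eq unfolding bt_def by simp
  next
    fix w assume "w \<in> colspace C"
    then obtain x where x: "x \<in> carrier_vec N" "w = C *\<^sub>v x" using C_dim unfolding colspace_def by auto
    show "bt \<bullet> w = 0" unfolding bt_def x(2) using pC[OF x(1)] pK(1) C_dim x(1) by simp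
  next
    fix b assume b: "b \<in> carrier_vec N" and bb: "(\<forall>i<N. \<bar>b $ i\<bar> \<le> 1) \<and> (\<forall>w\<in>colspace C. b \<bullet> w = 0)"
    have Cb: "C *\<^sub>v b \<in> carrier_vec N" using C_dim b by simp
    have "C *\<^sub>v (C *\<^sub>v b) \<in> colspace C" using Cb C_dim unfolding colspace_def by auto
    then have "b \<bullet> (C *\<^sub>v (C *\<^sub>v b)) = 0" using bb by auto
    then have "(C *\<^sub>v b) \<bullet> (C *\<^sub>v b) = 0"
      using transpose_vec_mult_scalar[OF C_dim Cb b] C_sym by simp
    moreover obtain u where u: "u = C *\<^sub>v b" by blast
    ultimately have uu: "u \<bullet> u = 0" and uc: "u \<in> carrier_vec N" using Cb by auto
    then have "(\<Sum>i\<in>{0..<N}. u $ i * u $ i) = 0" unfolding scalar_prod_def by simp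
    then have "\<forall>i\<in>{0..<N}. u $ i * u $ i = 0"
      by (subst (asm) sum_nonneg_eq_0_iff) auto
    then have "u = 0\<^sub>v N" using uc by (intro eq_vecI) auto
    then have "C *\<^sub>v b = 0\<^sub>v N" using u by simp
    then have bK: "b \<in> mat_kernel C" using b C_dim by (intro mat_kernelI) auto
    have pKm: "p \<in> mat_kernel C" using p_proj unfolding is_orth_proj_def by auto
    have p0: "p \<noteq> 0\<^sub>v N" using i0 mpos by auto
    obtain t where t: "b = t \<cdot>\<^sub>v p" using ker1[OF C_dim kd pKm p0 bK] by auto
    have "\<bar>t\<bar> * m \<le> 1"
    proof -
      have "\<bar>b $ i0\<bar> \<le> 1" using bb i0 by auto
      moreover have "b $ i0 = t * p $ i0" using t i0 pK(1) by simp
      ultimately show ?thesis using i0 by (simp add: abs_mult)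
    qed
    then have tg: "t \<le> \<gamma>"
    proof -
      assume tm: "\<bar>t\<bar> * m \<le> 1"
      have gm: "\<gamma> * m = 1" using g mpos unfolding m_def[symmetric] by simp
      have "m * t \<le> m * \<bar>t\<bar>" using mpos by (intro mult_left_mono) auto
      also have "\<dots> \<le> m * \<gamma>" using tm gm by (simp add: mult.commute)
      finally show ?thesis using mpos by (rule mult_left_le_imp_le)
    qed
    have "b \<bullet> h = t * (p \<bullet> p)" unfolding t using pK(1) h_dim hpp comm_scalar_prod[OF h_dim pK(1)] by simp
    also have "\<dots> \<le> \<gamma> * (p \<bullet> p)" using tg pp0 by (intro mult_right_mono) auto
    also have "\<dots> = bt \<bullet> h" unfolding bt_def using pK(1) h_dim hpp comm_scalar_prod[OF h_dim pK(1)] by simp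
    finally show "b \<bullet> h \<le> bt \<bullet> h" .
  qed
  show ?thesis using part1 part2 part3 part4 by blast
qed


end
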